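(* Let $N>0$, $R=\mathbb{Q}[x_1,x_2,y_1,y_2]$, and let $X_\circ$, $X_\bullet$, $\pi_\circ,\pi_\bullet$ and $a_2$ be as in the context. Define the $R$-linear map $\chi_0:X_\circ\to X_\bullet\{-2\}$ by $\chi_0(1)=\frac12(x_1+y_1-x_2-y_2)\cdot1+a_2\,\theta_1\theta_2$, $\chi_0(\theta_1)=-\theta_2+\frac12(x_1+y_1)\theta_1$, $\chi_0(\theta_2)=\theta_2-\frac12(x_2+y_2)\theta_1$, $\chi_0(\theta_1\theta_2)=\theta_1\theta_2$. Then $\chi_0$ is a morphism of graded matrix factorisations and $\pi_\bullet\circ\chi_0=m\circ\pi_\circ$, where $m:R/(y_1-x_1,y_2-x_2)\to R/(y_1+y_2-x_1-x_2,\,y_1y_2-x_1x_2)\{-2\}$ is multiplication by $\frac12(x_1+y_1-x_2-y_2)$.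
   Context: Variables have degree $2$; $M\{m\}$ denotes $M$ with grading shifted up by $m$ ($M\{m\}_i=M_{i-m}$). $t_i=y_i-x_i$, $w_i=(y_i^{N+1}-x_i^{N+1})/(y_i-x_i)$, $s_1=y_1+y_2-x_1-x_2$, $s_2=y_1y_2-x_1x_2$; $u_1,u_2$ homogeneous with $y_1^{N+1}+y_2^{N+1}-x_1^{N+1}-x_2^{N+1}=u_1s_1+u_2s_2$ and invariant under interchanging $(x_1,x_2)$ with $(y_1,y_2)$; $a_2=\frac12u_2+(u_1+y_1u_2-w_2)/(x_1-y_1)$ (a polynomial). For homogeneous sequences $\boldsymbol a,\boldsymbol b$ with $\deg a_i+\deg b_i=2c$ ($c=N+1$), $\{\boldsymbol a,\boldsymbol b\}$ is the exterior algebra over $R$ on $\theta_1,\theta_2$ ($\mathbb{Z}_2$-degree $1$, internal degree $\deg a_i-c$) with differential $(\sum b_i\theta_i^* )\lrcorner(-)+(\sum a_i\theta_i)\wedge(-)$. $X_\circ=\{(w_1,w_2),(t_1,t_2)\}$, $X_\bullet=\{(u_1,u_2),(s_1,s_2)\}$. $\pi_\circ:X_\circ\to R/(t_1,t_2)$ and $\pi_\bullet:X_\bullet\to R/(s_1,s_2)$ are the projections onto the exterior degree $0$ part $R$ followed by the quotient map. *)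

theory Defs
  imports "HOL-Computational_Algebra.Polynomial"
begin

text \<open>The ring R = Q[x1,x2,y1,y2], realised as iterated univariate polynomials.
  Outermost variable y2, then y1, then x2, innermost x1.\<close>

type_synonym R = "rat poly poly poly poly"

definition vy2 :: R where "vy2 = [:0, 1:]"
definition vy1 :: R where "vy1 = [:[:0, 1:]:]"
definition vx2 :: R where "vx2 = [:[:[:0, 1:]:]:]"
definition vx1 :: R where "vx1 = [:[:[:[:0, 1:]:]:]:]"

definition ratc :: "rat \<Rightarrow> R" where "ratc q = [:[:[:[:q:]:]:]:]"

definition mcoeff :: "R \<Rightarrow> nat \<Rightarrow> nat \<Rightarrow> nat \<Rightarrow> nat \<Rightarrow> rat" where
  "mcoeff f i j k l = coeff (coeff (coeff (coeff f i) j) k) l"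

definition hom :: "int \<Rightarrow> R \<Rightarrow> bool" where
  "hom n f \<longleftrightarrow> (\<forall>i j k l. mcoeff f i j k l \<noteq> 0 \<longrightarrow> 2 * int (i + j + k + l) = n)"

text \<open>Substitution y2:=A, y1:=B, x2:=C, x1:=D.\<close>
definition subst4 :: "R \<Rightarrow> R \<Rightarrow> R \<Rightarrow> R \<Rightarrow> R \<Rightarrow> R" where
  "subst4 f A B C D =
     poly (map_poly (\<lambda>g. poly (map_poly (\<lambda>h. poly (map_poly (\<lambda>k.
        poly (map_poly ratc k) D) h) C) g) B) f) A"

definition swapxy :: "R \<Rightarrow> R" where
  "swapxy f = subst4 f vx2 vx1 vy2 vy1"

text \<open>Elements of the exterior algebra over R on theta1, theta2, as coordinate
  tuples with respect to the basis (1, theta1, theta2, theta1 theta2).\<close>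
type_synonym ext = "R \<times> R \<times> R \<times> R"

definition ext_add :: "ext \<Rightarrow> ext \<Rightarrow> ext" where
  "ext_add e f = (case e of (e0, e1, e2, e3) \<Rightarrow> case f of (f0, f1, f2, f3) \<Rightarrow>
     (e0 + f0, e1 + f1, e2 + f2, e3 + f3))"

definition ext_smult :: "R \<Rightarrow> ext \<Rightarrow> ext" where
  "ext_smult r e = (case e of (e0, e1, e2, e3) \<Rightarrow> (r * e0, r * e1, r * e2, r * e3))"

definition one_e :: ext where "one_e = (1, 0, 0, 0)"
definition th1 :: ext where "th1 = (0, 1, 0, 0)"
definition th2 :: ext where "th2 = (0, 0, 1, 0)"
definition th12 :: ext where "th12 = (0, 0, 0, 1)"

text \<open>Left multiplication (wedge) by theta1, theta2 and contraction by theta1^*, theta2^*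
  (odd derivations, theta_i^* theta_j = delta_ij).\<close>
definition wedge1 :: "ext \<Rightarrow> ext" where
  "wedge1 e = (case e of (e0, e1, e2, e3) \<Rightarrow> (0, e0, 0, e2))"
definition wedge2 :: "ext \<Rightarrow> ext" where
  "wedge2 e = (case e of (e0, e1, e2, e3) \<Rightarrow> (0, 0, e0, - e1))"
definition contr1 :: "ext \<Rightarrow> ext" where
  "contr1 e = (case e of (e0, e1, e2, e3) \<Rightarrow> (e1, 0, e3, 0))"
definition contr2 :: "ext \<Rightarrow> ext" where
  "contr2 e = (case e of (e0, e1, e2, e3) \<Rightarrow> (e2, - e3, 0, 0))"

text \<open>Differential of the Koszul matrix factorisation {(a1,a2),(b1,b2)}:
  (b1 theta1^* + b2 theta2^*) contracted into e, plus (a1 theta1 + a2 theta2) wedge e.\<close>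
definition kd :: "R \<times> R \<Rightarrow> R \<times> R \<Rightarrow> ext \<Rightarrow> ext" where
  "kd a b e = ext_add
     (ext_add (ext_smult (fst b) (contr1 e)) (ext_smult (snd b) (contr2 e)))
     (ext_add (ext_smult (fst a) (wedge1 e)) (ext_smult (snd a) (wedge2 e)))"

definition ext_hom :: "int \<Rightarrow> int \<Rightarrow> int \<Rightarrow> ext \<Rightarrow> bool" where
  "ext_hom d1 d2 n e = (case e of (e0, e1, e2, e3) \<Rightarrow>
     hom n e0 \<and> hom (n - d1) e1 \<and> hom (n - d2) e2 \<and> hom (n - d1 - d2) e3)"

definition ext_even :: "ext \<Rightarrow> bool" where
  "ext_even e = (case e of (e0, e1, e2, e3) \<Rightarrow> e1 = 0 \<and> e2 = 0)"
definition ext_odd :: "ext \<Rightarrow> bool" where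
  "ext_odd e = (case e of (e0, e1, e2, e3) \<Rightarrow> e0 = 0 \<and> e3 = 0)"

definition ext0 :: "ext \<Rightarrow> R" where "ext0 e = fst e"

definition in_ideal2 :: "R \<Rightarrow> R \<Rightarrow> R \<Rightarrow> bool" where
  "in_ideal2 f g h \<longleftrightarrow> (\<exists>p q. f = p * g + q * h)"

definition tt1 :: R where "tt1 = vy1 - vx1"
definition tt2 :: R where "tt2 = vy2 - vx2"
definition ww1 :: "nat \<Rightarrow> R" where "ww1 N = (vy1 ^ (N + 1) - vx1 ^ (N + 1)) div (vy1 - vx1)"
definition ww2 :: "nat \<Rightarrow> R" where "ww2 N = (vy2 ^ (N + 1) - vx2 ^ (N + 1)) div (vy2 - vx2)"
definition ss1 :: R where "ss1 = vy1 + vy2 - vx1 - vx2"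
definition ss2 :: R where "ss2 = vy1 * vy2 - vx1 * vx2"

definition aa2 :: "nat \<Rightarrow> R \<Rightarrow> R \<Rightarrow> R" where
  "aa2 N u1 u2 = ratc (1/2) * u2 + (u1 + vy1 * u2 - ww2 N) div (vx1 - vy1)"

definition chi0 :: "nat \<Rightarrow> R \<Rightarrow> R \<Rightarrow> ext \<Rightarrow> ext" where
  "chi0 N u1 u2 e = (case e of (e0, e1, e2, e3) \<Rightarrow>
     ext_add
      (ext_add (ext_smult e0 (ext_add (ext_smult (ratc (1/2) * (vx1 + vy1 - vx2 - vy2)) one_e)
                                      (ext_smult (aa2 N u1 u2) th12)))
               (ext_smult e1 (ext_add (ext_smult (-1) th2) (ext_smult (ratc (1/2) * (vx1 + vy1)) th1))))
      (ext_add (ext_smult e2 (ext_add th2 (ext_smult (- (ratc (1/2) * (vx2 + vy2))) th1)))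
               (ext_smult e3 th12)))"

end

theory Submission
  imports Defs "HOL-Computational_Algebra.Polynomial_Factorial" "HOL-Computational_Algebra.Field_as_Ring"
begin


definition Hr :: "int \<Rightarrow> rat \<Rightarrow> bool" where "Hr n c \<longleftrightarrow> (c \<noteq> 0 \<longrightarrow> n = 0)"
definition HP :: "(int \<Rightarrow> 'a::zero \<Rightarrow> bool) \<Rightarrow> int \<Rightarrow> 'a poly \<Rightarrow> bool" where
  "HP H n p \<longleftrightarrow> (\<forall>i. H (n - 2 * int i) (coeff p i))"

definition good :: "(int \<Rightarrow> 'a::idom \<Rightarrow> bool) \<Rightarrow> bool" where
 "good H \<longleftrightarrow> (\<forall>n. H n 0) \<and> H 0 1 \<and> (\<forall>n a b. H n a \<longrightarrow> H n b \<longrightarrow> H n (a+b))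
   \<and> (\<forall>n a. H n a \<longrightarrow> H n (-a))
   \<and> (\<forall>m k a b. H m a \<longrightarrow> H k b \<longrightarrow> H (m+k) (a*b))
   \<and> (\<forall>m k a b. H k a \<longrightarrow> a \<noteq> 0 \<longrightarrow> H m (a*b) \<longrightarrow> H (m-k) b)"

lemma goodD:
  assumes "good H"
  shows "H n 0" "H 0 1" "H n a \<Longrightarrow> H n b \<Longrightarrow> H n (a+b)" "H n a \<Longrightarrow> H n (-a)"
    "H m a \<Longrightarrow> H k b \<Longrightarrow> H (m+k) (a*b)" "H k a \<Longrightarrow> a \<noteq> 0 \<Longrightarrow> H m (a*b) \<Longrightarrow> H (m-k) b"
proof -
  note all = assms[unfolded good_def]
  note A = all[THEN conjunct1]
  note B = all[THEN conjunct2, THEN conjunct1]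
  note C = all[THEN conjunct2, THEN conjunct2, THEN conjunct1]
  note D = all[THEN conjunct2, THEN conjunct2, THEN conjunct2, THEN conjunct1]
  note E = all[THEN conjunct2, THEN conjunct2, THEN conjunct2, THEN conjunct2, THEN conjunct1]
  note F = all[THEN conjunct2, THEN conjunct2, THEN conjunct2, THEN conjunct2, THEN conjunct2]
  show "H n 0" using A by (rule spec)
  show "H 0 1" by (rule B)
  show "H n a \<Longrightarrow> H n b \<Longrightarrow> H n (a+b)" using C by blast
  show "H n a \<Longrightarrow> H n (-a)" using D by blast
  show "H m a \<Longrightarrow> H k b \<Longrightarrow> H (m+k) (a*b)" using E by blast
  show "H k a \<Longrightarrow> a \<noteq> 0 \<Longrightarrow> H m (a*b) \<Longrightarrow> H (m-k) b" using F by blast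
qed

lemma good_Hr: "good Hr"
  unfolding good_def Hr_def by auto

lemma good_sum:
  assumes g: "good H" and "finite A" and "\<And>i. i \<in> A \<Longrightarrow> H n (f i)"
  shows "H n (sum f A)"
  using assms(2,3)
proof (induction A rule: finite_induct)
  case empty then show ?case using goodD(1)[OF g] by simp
next
  case (insert x F) then show ?case using goodD(3)[OF g] by simp
qed

lemma good_HP:
  assumes g: "good H" shows "good (HP H)"
proof -
  note H0 = goodD(1)[OF g] and H1 = goodD(2)[OF g] and Hadd = goodD(3)[OF g]
    and Hneg = goodD(4)[OF g] and Hmul = goodD(5)[OF g] and Hcan = goodD(6)[OF g]
  have Hmul': "\<And>m k n a b. H m a \<Longrightarrow> H k b \<Longrightarrow> n = m + k \<Longrightarrow> H n (a*b)" using Hmul by blast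
  have p0: "\<And>n. HP H n 0" unfolding HP_def using H0 by simp
  have p1: "HP H 0 1" unfolding HP_def coeff_1 using H0 H1 by simp
  have padd: "\<And>n a b. HP H n a \<Longrightarrow> HP H n b \<Longrightarrow> HP H n (a+b)" unfolding HP_def using Hadd by simp
  have pneg: "\<And>n a. HP H n a \<Longrightarrow> HP H n (-a)" unfolding HP_def using Hneg by simp
  have pmul: "HP H (m+k) (p*q)" if hp: "HP H m p" and hq: "HP H k q" for m k p q
    unfolding HP_def coeff_mult
  proof (rule allI, rule good_sum[OF g])
    fix n :: nat and i assume "i \<in> {..n}"
    then have i: "i \<le> n" by simp
    show "H (m + k - 2 * int n) (coeff p i * coeff q (n - i))"
    proof (rule Hmul')
      show "H (m - 2 * int i) (coeff p i)" using hp unfolding HP_def by (rule spec)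
      show "H (k - 2 * int (n - i)) (coeff q (n - i))" using hq unfolding HP_def by (rule spec)
      show "m + k - 2 * int n = m - 2 * int i + (k - 2 * int (n - i))" using i by (simp add: of_nat_diff)
    qed
  qed simp
  have pcan: "HP H (m - k) q" if hp: "HP H k p" and pz: "p \<noteq> 0" and hpq: "HP H m (p*q)" for m k p q
  proof -
    have ex: "\<exists>i. coeff p i \<noteq> 0" using pz leading_coeff_neq_0 by blast
    define i0 where "i0 = (LEAST i. coeff p i \<noteq> 0)"
    have ci0: "coeff p i0 \<noteq> 0" using LeastI_ex[OF ex] unfolding i0_def .
    have below: "coeff p i = 0" if "i < i0" for i using not_less_Least[OF that[unfolded i0_def]] by simp
    have "H (m - k - 2 * int j) (coeff q j)" for j
    proof (induction j rule: less_induct)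
      case (less j)
      let ?n = "i0 + j"
      have cm: "coeff (p*q) ?n = coeff p i0 * coeff q j + (\<Sum>i\<in>{..?n}-{i0}. coeff p i * coeff q (?n - i))"
        unfolding coeff_mult by (subst sum.remove[of "{..?n}" i0]) auto
      have Hn: "H (m - 2 * int ?n) (coeff (p*q) ?n)" using hpq unfolding HP_def by (rule spec)
      have Hs: "H (m - 2*int ?n) (\<Sum>i\<in>{..?n}-{i0}. coeff p i * coeff q (?n - i))"
      proof (rule good_sum[OF g])
        fix i assume i: "i \<in> {..?n}-{i0}"
        show "H (m - 2*int ?n) (coeff p i * coeff q (?n - i))"
        proof (cases "i < i0")
          case True then show ?thesis using below H0 by simp
        next
          case False
          then have "?n - i < j" using i by auto
          then have A: "H (m - k - 2*int(?n - i)) (coeff q (?n-i))" by (rule less.IH)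
          have B: "H (k - 2*int i) (coeff p i)" using hp unfolding HP_def by (rule spec)
          show ?thesis
          proof (rule Hmul'[OF B A])
            show "m - 2 * int (i0 + j) = k - 2 * int i + (m - k - 2 * int (i0 + j - i))"
              using i False by (simp add: of_nat_diff)
          qed
        qed
      qed simp
      have "H (m - 2*int ?n) (coeff (p*q) ?n + - (\<Sum>i\<in>{..?n}-{i0}. coeff p i * coeff q (?n - i)))"
        by (rule Hadd[OF Hn Hneg[OF Hs]])
      then have Y: "H (m - 2*int ?n) (coeff p i0 * coeff q j)" using cm by simp
      have Z: "H (k - 2*int i0) (coeff p i0)" using hp unfolding HP_def by (rule spec)
      have X: "H ((m - 2*int ?n) - (k - 2*int i0)) (coeff q j)" by (rule Hcan[OF Z ci0 Y])
      have eq: "(m - 2*int ?n) - (k - 2*int i0) = m - k - 2*int j" by simp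
      show ?case by (subst eq[symmetric]) (rule X)
    qed
    then show ?thesis unfolding HP_def by blast
  qed
  show ?thesis unfolding good_def
    by (intro conjI allI impI p0 p1 padd pneg pmul pcan; assumption)
qed

abbreviation "H4 \<equiv> HP (HP (HP (HP Hr)))"

lemma hom_eq: "hom n f = H4 n f"
proof -
  have "hom n f \<longleftrightarrow> (\<forall>i j k l. mcoeff f i j k l \<noteq> 0 \<longrightarrow> n - 2*int i - 2*int j - 2*int k - 2*int l = 0)"
    unfolding hom_def by (intro iff_allI) (auto simp: algebra_simps)
  also have "\<dots> \<longleftrightarrow> H4 n f" unfolding HP_def Hr_def mcoeff_def by (simp add: diff_diff_eq)
  finally show ?thesis .
qed

lemma good_H4: "good H4" by (intro good_HP good_Hr)




lemma hom_0: "hom n 0" unfolding hom_eq by (rule goodD(1)[OF good_H4])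
lemma hom_1: "hom 0 1" unfolding hom_eq by (rule goodD(2)[OF good_H4])
lemma hom_add: "hom n a \<Longrightarrow> hom n b \<Longrightarrow> hom n (a+b)" unfolding hom_eq by (rule goodD(3)[OF good_H4])
lemma hom_neg: "hom n a \<Longrightarrow> hom n (-a)" unfolding hom_eq by (rule goodD(4)[OF good_H4])
lemma hom_diff: "hom n a \<Longrightarrow> hom n b \<Longrightarrow> hom n (a-b)"
  using hom_add[of n a "-b"] hom_neg[of n b] by simp
lemma hom_mult: "hom m a \<Longrightarrow> hom k b \<Longrightarrow> n = m + k \<Longrightarrow> hom n (a*b)"
  unfolding hom_eq using goodD(5)[OF good_H4] by blast
lemma hom_cancel: "hom k a \<Longrightarrow> a \<noteq> 0 \<Longrightarrow> hom m (a*b) \<Longrightarrow> n = m - k \<Longrightarrow> hom n b"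
  unfolding hom_eq using goodD(6)[OF good_H4] by blast
lemma hom_pow: "hom m a \<Longrightarrow> hom (int n * m) (a ^ n)"
  by (induction n) (auto intro: hom_1 hom_mult simp: algebra_simps)

lemma hom_vy2: "hom 2 vy2" unfolding hom_def mcoeff_def vy2_def by (auto simp: coeff_pCons split: nat.splits)
lemma hom_vy1: "hom 2 vy1" unfolding hom_def mcoeff_def vy1_def by (auto simp: coeff_pCons split: nat.splits)
lemma hom_vx2: "hom 2 vx2" unfolding hom_def mcoeff_def vx2_def by (auto simp: coeff_pCons split: nat.splits)
lemma hom_vx1: "hom 2 vx1" unfolding hom_def mcoeff_def vx1_def by (auto simp: coeff_pCons split: nat.splits)
lemma hom_ratc: "hom 0 (ratc q)" unfolding hom_def mcoeff_def ratc_def by (auto simp: coeff_pCons split: nat.splits)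

lemma ratc_half0: "ratc (1/2) + ratc (1/2) = 1"
  unfolding ratc_def by (simp add: one_pCons)
lemma ratc_half: "2 * ratc (1/2) = 1"
  using ratc_half0 by (simp only: mult_2)

lemma vy1_ne: "vy1 - vx1 \<noteq> 0" unfolding vy1_def vx1_def by simp
lemma vy2_ne: "vy2 - vx2 \<noteq> 0" unfolding vy2_def vx2_def by simp

lemma ww2_eq: "ww2 N * (vy2 - vx2) = vy2 ^ (N + 1) - vx2 ^ (N + 1)"
proof -
  obtain S where S: "vy2 ^ (N + 1) - vx2 ^ (N + 1) = (vy2 - vx2) * S"
    using power_diff_sumr2 by blast
  then show ?thesis unfolding ww2_def using vy2_ne by (simp add: mult.commute)
qed
lemma ww1_eq: "ww1 N * (vy1 - vx1) = vy1 ^ (N + 1) - vx1 ^ (N + 1)"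
proof -
  obtain S where S: "vy1 ^ (N + 1) - vx1 ^ (N + 1) = (vy1 - vx1) * S"
    using power_diff_sumr2 by blast
  then show ?thesis unfolding ww1_def using vy1_ne by (simp add: mult.commute)
qed

lemma hom_ww2: "hom (2 * int N) (ww2 N)"
proof (rule hom_cancel[of 2 "vy2 - vx2"])
  show "hom 2 (vy2 - vx2)" by (intro hom_diff hom_vy2 hom_vx2)
  show "vy2 - vx2 \<noteq> 0" by (rule vy2_ne)
  show "hom (2 * int N + 2) ((vy2 - vx2) * ww2 N)"
    unfolding mult.commute[of _ "ww2 N"] ww2_eq
    using hom_diff[OF hom_pow[OF hom_vy2, of "N+1"] hom_pow[OF hom_vx2, of "N+1"]]
    by (simp add: algebra_simps)
qed simp

lemma coprime_t: "coprime (vy1 - vx1) (vy2 - vx2)"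
proof (rule coprimeI)
  fix d assume d1: "d dvd vy1 - vx1" and d2: "d dvd vy2 - vx2"
  have e1: "vy1 - vx1 = [: [:0, 1:] - [:[:[:0, 1:]:]:] :]" unfolding vy1_def vx1_def by simp
  have e2: "vy2 - vx2 = [: - [:[:0, 1:]:], 1 :]" unfolding vy2_def vx2_def by (simp add: one_pCons)
  have nz: "[:0, 1:] - [:[:[:0, 1:]:]:] \<noteq> (0 :: rat poly poly poly)" by simp
  have "degree d \<le> degree (vy1 - vx1)" using dvd_imp_degree_le[OF d1 vy1_ne] .
  then have "degree d = 0" unfolding e1 by simp
  then have dd: "d = [:coeff d 0:]" by (metis degree_0_id)
  have "coeff d 0 dvd coeff (vy2 - vx2) 1" using d2 dd const_poly_dvd_iff by metis
  then have "coeff d 0 dvd 1" unfolding e2 by simp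
  then show "is_unit d" using dd is_unit_const_poly_iff by metis
qed




context
  fixes x1 x2 y1 y2 u1 u2 w1 w2 c A e0 e1 e2 e3 :: "'a::idom"
  assumes c2: "2 * c = 1"
    and I: "A * (y1 - x1) = w2 - u1 - u2 * c * (x1 + y1)"
    and II: "A * (y2 - x2) = u1 + u2 * c * (x2 + y2) - w1"
begin
lemma alg_s2: "y1*y2 - x1*x2 = c*(x1+y1)*(y2-x2) + c*(x2+y2)*(y1-x1)"
  using c2 by algebra
lemma alg_kd1: "(y1 + y2 - x1 - x2) * (e1 * (c * (x1 + y1)) - e2 * (c * (x2 + y2))) + (y1 * y2 - x1 * x2) * (e2 - e1)
      = ((y1 - x1) * e1 + (y2 - x2) * e2) * (c * (x1 + y1 - x2 - y2))"
  using c2 I II by algebra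
lemma alg_kd2: "(y1 * y2 - x1 * x2) * (- (e0 * A) - e3) + u1 * (e0 * (c * (x1 + y1 - x2 - y2)))
      = (w1 * e0 - (y2 - x2) * e3) * (c * (x1 + y1)) - ((y1 - x1) * e3 + w2 * e0) * (c * (x2 + y2))"
proof -
  have "(y1 * y2 - x1 * x2) * (- (e0 * A) - e3) = - e0 * (c*(x1+y1)*(A*(y2-x2)) + c*(x2+y2)*(A*(y1-x1)))
     - e3 * (c*(x1+y1)*(y2-x2) + c*(x2+y2)*(y1-x1))"
    unfolding alg_s2 by (simp add: algebra_simps)
  also have "\<dots> = - e0 * (c*(x1+y1)*(u1 + u2 * c * (x2 + y2) - w1) + c*(x2+y2)*(w2 - u1 - u2 * c * (x1 + y1)))
     - e3 * (c*(x1+y1)*(y2-x2) + c*(x2+y2)*(y1-x1))"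
    by (simp only: I II)
  finally show ?thesis by (simp add: algebra_simps)
qed
lemma alg_kd3: "(y1 + y2 - x1 - x2) * (e0 * A + e3) + u2 * (e0 * (c * (x1 + y1 - x2 - y2)))
      = (y1 - x1) * e3 + w2 * e0 - (w1 * e0 - (y2 - x2) * e3)"
  using c2 I II by algebra
lemma alg_kd4: "u1 * (e2 - e1) + u2 * (e2 * (c * (x2 + y2)) - e1 * (c * (x1 + y1)))
      = ((y1 - x1) * e1 + (y2 - x2) * e2) * A + (w1 * e2 - w2 * e1)"
  using c2 I II by algebra
end



lemma alg1:
  fixes x1 x2 y1 y2 u1 u2 w1 w2 P1 P2 :: "'a::comm_ring_1"
  assumes "P1 + P2 = u1 * (y1 + y2 - x1 - x2) + u2 * (y1 * y2 - x1 * x2)"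
    and "w1 * (y1 - x1) = P1" and "w2 * (y2 - x2) = P2"
  shows "(y2 - x2) * (u1 + y1 * u2 - w2) = (y1 - x1) * (w1 - u1 - u2 * x2)"
proof -
  have e: "w2 * (y2 - x2) = u1 * (y1 + y2 - x1 - x2) + u2 * (y1 * y2 - x1 * x2) - w1 * (y1 - x1)"
    using assms by (simp add: algebra_simps)
  have "(y2 - x2) * (u1 + y1 * u2 - w2) = (y2 - x2) * (u1 + y1 * u2) - w2 * (y2 - x2)"
    by (simp add: algebra_simps)
  also have "\<dots> = (y2 - x2) * (u1 + y1 * u2) - (u1 * (y1 + y2 - x1 - x2) + u2 * (y1 * y2 - x1 * x2) - w1 * (y1 - x1))"
    by (simp only: e)
  also have "\<dots> = (y1 - x1) * (w1 - u1 - u2 * x2)"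
    by (simp add: algebra_simps)
  finally show ?thesis .
qed

lemma alg2:
  fixes x1 x2 y1 y2 u1 u2 w1 w2 c Q A :: "'a::comm_ring_1"
  assumes c2: "2 * c = 1" and Q: "Q * (x1 - y1) = u1 + y1 * u2 - w2" and A: "A = c * u2 + Q"
  shows "A * (y1 - x1) = w2 - u1 - u2 * c * (x1 + y1)"
proof -
  have "A * (y1 - x1) = c * u2 * (y1 - x1) - Q * (x1 - y1)" unfolding A by (simp add: algebra_simps)
  also have "\<dots> = c * u2 * (y1 - x1) - (u1 + y1 * u2 - w2)" by (simp only: Q)
  also have "\<dots> = w2 - u1 - u2 * c * (x1 + y1) + u2 * y1 * (2 * c - 1)" by (simp add: algebra_simps)
  also have "\<dots> = w2 - u1 - u2 * c * (x1 + y1)" by (simp add: c2)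
  finally show ?thesis .
qed

lemma alg3:
  fixes x1 x2 y1 y2 u1 u2 w1 w2 c A P1 P2 :: "'a::comm_ring_1"
  assumes c2: "2 * c = 1" and I: "A * (y1 - x1) = w2 - u1 - u2 * c * (x1 + y1)"
    and "P1 + P2 = u1 * (y1 + y2 - x1 - x2) + u2 * (y1 * y2 - x1 * x2)"
    and "w1 * (y1 - x1) = P1" and "w2 * (y2 - x2) = P2"
  shows "(y1 - x1) * (A * (y2 - x2)) = (y1 - x1) * (u1 + u2 * c * (x2 + y2) - w1)"
proof -
  have e: "w2 * (y2 - x2) = u1 * (y1 + y2 - x1 - x2) + u2 * (y1 * y2 - x1 * x2) - w1 * (y1 - x1)"
    using assms by (simp add: algebra_simps)
  have "(y1 - x1) * (A * (y2 - x2)) = (y2 - x2) * (A * (y1 - x1))" by (simp add: algebra_simps)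
  also have "\<dots> = (y2 - x2) * (w2 - u1 - u2 * c * (x1 + y1))" by (simp only: I)
  also have "\<dots> = w2 * (y2 - x2) - (y2 - x2) * (u1 + u2 * c * (x1 + y1))" by (simp add: algebra_simps)
  also have "\<dots> = (u1 * (y1 + y2 - x1 - x2) + u2 * (y1 * y2 - x1 * x2) - w1 * (y1 - x1))
      - (y2 - x2) * (u1 + u2 * c * (x1 + y1))" by (simp only: e)
  also have "\<dots> = (y1 - x1) * (u1 + u2 * c * (x2 + y2) - w1) + u2 * (y1 * y2 - x1 * x2) * (1 - 2 * c)"
    by (simp add: algebra_simps)
  also have "\<dots> = (y1 - x1) * (u1 + u2 * c * (x2 + y2) - w1)" by (simp add: c2)
  finally show ?thesis .
qed

lemma aa2_facts:
  fixes N :: nat and u1 u2 :: R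
  assumes H: "vy1 ^ (N + 1) + vy2 ^ (N + 1) - vx1 ^ (N + 1) - vx2 ^ (N + 1) = u1 * ss1 + u2 * ss2"
  shows "aa2 N u1 u2 * (vy1 - vx1) = ww2 N - u1 - u2 * ratc (1/2) * (vx1 + vy1)"
    and "aa2 N u1 u2 * (vy2 - vx2) = u1 + u2 * ratc (1/2) * (vx2 + vy2) - ww1 N"
    and "(u1 + vy1 * u2 - ww2 N) div (vx1 - vy1) * (vx1 - vy1) = u1 + vy1 * u2 - ww2 N"
proof -
  define F where "F = u1 + vy1 * u2 - ww2 N"
  have w1: "ww1 N * (vy1 - vx1) = vy1 ^ (N + 1) - vx1 ^ (N + 1)" by (rule ww1_eq)
  have w2: "ww2 N * (vy2 - vx2) = vy2 ^ (N + 1) - vx2 ^ (N + 1)" by (rule ww2_eq)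
  have H': "(vy1 ^ (N + 1) - vx1 ^ (N + 1)) + (vy2 ^ (N + 1) - vx2 ^ (N + 1))
       = u1 * (vy1 + vy2 - vx1 - vx2) + u2 * (vy1 * vy2 - vx1 * vx2)"
    using H unfolding ss1_def ss2_def by (simp add: algebra_simps)
  have "(vy2 - vx2) * F = (vy1 - vx1) * (ww1 N - u1 - u2 * vx2)"
    unfolding F_def by (rule alg1[OF H' w1 w2])
  then have "(vy1 - vx1) dvd (vy2 - vx2) * F" by simp
  then have d1: "(vy1 - vx1) dvd F" unfolding coprime_dvd_mult_right_iff[OF coprime_t] .
  have mm: "vx1 - vy1 = - (vy1 - vx1)" by simp
  have "(vx1 - vy1) dvd F" unfolding mm minus_dvd_iff by (rule d1)
  then have Q: "F div (vx1 - vy1) * (vx1 - vy1) = F" by (rule dvd_div_mult_self)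
  then show "(u1 + vy1 * u2 - ww2 N) div (vx1 - vy1) * (vx1 - vy1) = u1 + vy1 * u2 - ww2 N"
    unfolding F_def .
  have A: "aa2 N u1 u2 = ratc (1/2) * u2 + (u1 + vy1 * u2 - ww2 N) div (vx1 - vy1)"
    by (simp add: aa2_def)
  have c2: "2 * ratc (1/2) = 1" by (rule ratc_half)
  show I: "aa2 N u1 u2 * (vy1 - vx1) = ww2 N - u1 - u2 * ratc (1/2) * (vx1 + vy1)"
    by (rule alg2[OF c2 Q[unfolded F_def] A])
  have "(vy1 - vx1) * (aa2 N u1 u2 * (vy2 - vx2)) = (vy1 - vx1) * (u1 + u2 * ratc (1/2) * (vx2 + vy2) - ww1 N)"
    by (rule alg3[OF c2 I H' w1 w2])
  then show "aa2 N u1 u2 * (vy2 - vx2) = u1 + u2 * ratc (1/2) * (vx2 + vy2) - ww1 N"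
    using vy1_ne by simp
qed

lemma hom_aa2:
  fixes N :: nat and u1 u2 :: R
  assumes H: "vy1 ^ (N + 1) + vy2 ^ (N + 1) - vx1 ^ (N + 1) - vx2 ^ (N + 1) = u1 * ss1 + u2 * ss2"
    and h1: "hom (2 * int N) u1" and h2: "hom (2 * int N - 2) u2"
  shows "hom (2 * int N - 2) (aa2 N u1 u2)"
proof -
  have Q: "(u1 + vy1 * u2 - ww2 N) div (vx1 - vy1) * (vx1 - vy1) = u1 + vy1 * u2 - ww2 N"
    using aa2_facts(3)[OF H] .
  have hF: "hom (2 * int N) (u1 + vy1 * u2 - ww2 N)"
    by (intro hom_diff hom_add h1 hom_ww2 hom_mult[OF hom_vy1 h2]) simp
  have hQ: "hom (2 * int N - 2) ((u1 + vy1 * u2 - ww2 N) div (vx1 - vy1))"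
  proof (rule hom_cancel[of 2 "vx1 - vy1"])
    show "hom 2 (vx1 - vy1)" by (intro hom_diff hom_vy1 hom_vx1)
    show "vx1 - vy1 \<noteq> 0" using vy1_ne by (metis eq_iff_diff_eq_0)
    show "hom (2 * int N) ((vx1 - vy1) * ((u1 + vy1 * u2 - ww2 N) div (vx1 - vy1)))"
      using hF Q by (simp add: mult.commute)
  qed simp
  show ?thesis unfolding aa2_def
    by (intro hom_add hQ hom_mult[OF hom_ratc h2]) simp
qed




theorem lemmaA6:
  fixes N :: nat and u1 u2 :: R
  assumes "N > 0"
    and "hom (2 * int N) u1" and "hom (2 * int N - 2) u2"
    and "vy1 ^ (N + 1) + vy2 ^ (N + 1) - vx1 ^ (N + 1) - vx2 ^ (N + 1) = u1 * ss1 + u2 * ss2"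
    and "swapxy u1 = u1" and "swapxy u2 = u2"
  shows
    "(\<forall>e. ext_even e \<longrightarrow> ext_even (chi0 N u1 u2 e))
     \<and> (\<forall>e. ext_odd e \<longrightarrow> ext_odd (chi0 N u1 u2 e))
     \<and> (\<forall>n e. ext_hom (int (N + 1) - 2 * int N) (int (N + 1) - 2 * int N) n e
              \<longrightarrow> ext_hom (int (N + 1) - 2 * int N) (int (N + 1) - (2 * int N - 2)) (n + 2)
                    (chi0 N u1 u2 e))
     \<and> (\<forall>e. kd (u1, u2) (ss1, ss2) (chi0 N u1 u2 e) = chi0 N u1 u2 (kd (ww1 N, ww2 N) (tt1, tt2) e))
     \<and> (\<forall>r. in_ideal2 r tt1 tt2 \<longrightarrow> in_ideal2 (ratc (1/2) * (vx1 + vy1 - vx2 - vy2) * r) ss1 ss2)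
     \<and> (\<forall>e. in_ideal2 (ext0 (chi0 N u1 u2 e) - ratc (1/2) * (vx1 + vy1 - vx2 - vy2) * ext0 e) ss1 ss2)"
proof -
  note H = assms(4)
  have c2: "2 * ratc (1/2) = 1" by (rule ratc_half)
  note I = aa2_facts(1)[OF H] and II = aa2_facts(2)[OF H]
  have hA: "hom (2 * int N - 2) (aa2 N u1 u2)" by (rule hom_aa2[OF H assms(2,3)])
  have P1: "\<forall>e. ext_even e \<longrightarrow> ext_even (chi0 N u1 u2 e)"
  proof (intro allI impI)
    fix e :: ext
    obtain e0 e1 e2 e3 where e: "e = (e0, e1, e2, e3)" by (cases e) auto
    assume "ext_even e" then show "ext_even (chi0 N u1 u2 e)"
      unfolding e chi0_def ext_even_def ext_add_def ext_smult_def one_e_def th1_def th2_def th12_def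
      by simp
  qed
  have P2: "\<forall>e. ext_odd e \<longrightarrow> ext_odd (chi0 N u1 u2 e)"
  proof (intro allI impI)
    fix e :: ext
    obtain e0 e1 e2 e3 where e: "e = (e0, e1, e2, e3)" by (cases e) auto
    assume "ext_odd e" then show "ext_odd (chi0 N u1 u2 e)"
      unfolding e chi0_def ext_odd_def ext_add_def ext_smult_def one_e_def th1_def th2_def th12_def
      by simp
  qed
  have hv: "hom 2 (ratc (1/2) * (vx1 + vy1 - vx2 - vy2))"
  proof -
    have "hom 2 (vx1 + vy1 - vx2 - vy2)" by (intro hom_diff hom_add hom_vx1 hom_vy1 hom_vx2 hom_vy2)
    then show ?thesis by (rule hom_mult[OF hom_ratc]) simp
  qed
  have hv1: "hom 2 (ratc (1/2) * (vx1 + vy1))"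
  proof -
    have "hom 2 (vx1 + vy1)" by (intro hom_add hom_vx1 hom_vy1)
    then show ?thesis by (rule hom_mult[OF hom_ratc]) simp
  qed
  have hv2: "hom 2 (ratc (1/2) * (vx2 + vy2))"
  proof -
    have "hom 2 (vx2 + vy2)" by (intro hom_add hom_vx2 hom_vy2)
    then show ?thesis by (rule hom_mult[OF hom_ratc]) simp
  qed
  have P3: "\<forall>n e. ext_hom (int (N + 1) - 2 * int N) (int (N + 1) - 2 * int N) n e
              \<longrightarrow> ext_hom (int (N + 1) - 2 * int N) (int (N + 1) - (2 * int N - 2)) (n + 2)
                    (chi0 N u1 u2 e)"
  proof (intro allI impI)
    fix n and e :: ext
    obtain e0 e1 e2 e3 where e: "e = (e0, e1, e2, e3)" by (cases e) auto
    assume "ext_hom (int (N + 1) - 2 * int N) (int (N + 1) - 2 * int N) n e"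
    then have h0: "hom n e0" and h1: "hom (n - (1 - int N)) e1" and h2: "hom (n - (1 - int N)) e2"
      and h3: "hom (n + 2 * int N - 2) e3"
      unfolding e ext_hom_def by (simp_all add: algebra_simps)
    have g0: "hom (n + 2) (e0 * (ratc (1 / 2) * (vx1 + vy1 - vx2 - vy2)))"
      by (rule hom_mult[OF h0 hv]) simp
    have g1: "hom (1 + (n + int N)) (e1 * (ratc (1 / 2) * (vx1 + vy1)) - e2 * (ratc (1 / 2) * (vx2 + vy2)))"
      by (intro hom_diff hom_mult[OF h1 hv1] hom_mult[OF h2 hv2]) simp_all
    have g2: "hom (n + int N - 1) (e2 - e1)"
    proof -
      have "hom (n - (1 - int N)) (e2 - e1)" by (rule hom_diff[OF h2 h1])
      moreover have "n - (1 - int N) = n + int N - 1" by simp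
      ultimately show ?thesis by simp
    qed
    have g3: "hom (n + 2 * int N - 2) (e0 * aa2 N u1 u2 + e3)"
      by (intro hom_add h3 hom_mult[OF h0 hA]) simp
    show "ext_hom (int (N + 1) - 2 * int N) (int (N + 1) - (2 * int N - 2)) (n + 2) (chi0 N u1 u2 e)"
      unfolding e chi0_def ext_hom_def ext_add_def ext_smult_def one_e_def th1_def th2_def th12_def
      using g0 g1 g2 g3 by simp
  qed
  have P4: "\<forall>e. kd (u1, u2) (ss1, ss2) (chi0 N u1 u2 e) = chi0 N u1 u2 (kd (ww1 N, ww2 N) (tt1, tt2) e)"
  proof
    fix e :: ext
    obtain e0 e1 e2 e3 where e: "e = (e0, e1, e2, e3)" by (cases e) auto
    show "kd (u1, u2) (ss1, ss2) (chi0 N u1 u2 e) = chi0 N u1 u2 (kd (ww1 N, ww2 N) (tt1, tt2) e)"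
      unfolding e chi0_def kd_def ext_add_def ext_smult_def one_e_def th1_def th2_def th12_def
         contr1_def contr2_def wedge1_def wedge2_def ss1_def ss2_def tt1_def tt2_def
      apply simp
      apply (intro conjI)
         apply (rule alg_kd1[OF c2 I II])
        apply (rule alg_kd2[OF c2 I II])
       apply (rule alg_kd3[OF c2 I II])
      apply (rule alg_kd4[OF c2 I II])
      done
  qed
  have P5: "\<forall>r. in_ideal2 r tt1 tt2 \<longrightarrow> in_ideal2 (ratc (1/2) * (vx1 + vy1 - vx2 - vy2) * r) ss1 ss2"
  proof (intro allI impI)
    fix r assume "in_ideal2 r tt1 tt2"
    then obtain p q where r: "r = p * tt1 + q * tt2" unfolding in_ideal2_def by blast
    let ?c = "ratc (1/2)"
    have "?c * (vx1 + vy1 - vx2 - vy2) * r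
        = (p * (?c * (vx1 + vy1)) - q * (?c * (vx2 + vy2))) * ss1 + (q - p) * ss2"
      unfolding r tt1_def tt2_def ss1_def ss2_def using c2 by algebra
    then show "in_ideal2 (?c * (vx1 + vy1 - vx2 - vy2) * r) ss1 ss2"
      unfolding in_ideal2_def by blast
  qed
  have P6: "\<forall>e. in_ideal2 (ext0 (chi0 N u1 u2 e) - ratc (1/2) * (vx1 + vy1 - vx2 - vy2) * ext0 e) ss1 ss2"
  proof
    fix e :: ext
    obtain e0 e1 e2 e3 where e: "e = (e0, e1, e2, e3)" by (cases e) auto
    have "ext0 (chi0 N u1 u2 e) - ratc (1/2) * (vx1 + vy1 - vx2 - vy2) * ext0 e = 0 * ss1 + 0 * ss2"
      unfolding e chi0_def ext0_def ext_add_def ext_smult_def one_e_def th1_def th2_def th12_def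
      by simp
    then show "in_ideal2 (ext0 (chi0 N u1 u2 e) - ratc (1/2) * (vx1 + vy1 - vx2 - vy2) * ext0 e) ss1 ss2"
      unfolding in_ideal2_def by blast
  qed
  show ?thesis using P1 P2 P3 P4 P5 P6 by blast
qed


end
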